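(* Let $G$ be a finite multigraph without self-loops and let $G'$ be obtained from $G$ by a single channel-preserving move. Then $|\mathcal{C}(G)|=|\mathcal{C}(G')|$. If moreover $G$ is bipartite, then $|\mathcal{C}_B(G)|=|\mathcal{C}_B(G')|$ and $|\mathcal{C}_W(G)|=|\mathcal{C}_W(G')|$.
   Context: Multiple edges are allowed. For a vertex $v$, $N(v)$ is the multiset of neighbours of $v$, each neighbour appearing with multiplicity equal to the number of edges joining it to $v$; for a vertex set $C$, $|N(v)\cap C|$ counts elements of $N(v)$ lying in $C$ with multiplicity. A channel is a vertex set $C$ with $|N(v)\cap C|$ even for every vertex $v$ (empty set included); $\mathcal{C}(G)$ is the set of channels, and for bipartite $G$, $\mathcal{C}_B(G)$ and $\mathcal{C}_W(G)$ are the sets of channels consisting only of black, resp. only of white, vertices. The channel-preserving moves are: (VC) 2-valent vertex contraction: for a vertex $v$ of degree $2$ adjacent to two distinct vertices $v_1,v_2$, contract both edges at $v$ (merging $v,v_1,v_2$ into one vertex) and delete any resulting self-loops; (ED) doubled edge deletion: delete two edges having the same pair of endpoints; (FV) forced vertex pair removal: for distinct adjacent vertices $v_1,v_2$ with $\deg v_1=1$, delete $v_1,v_2$ and all edges incident to them. In the bipartite case, the merged vertex in (VC) receives the common color of $v_1,v_2$. *)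

theory Defs
  imports Main
begin

text \<open>A finite multigraph without self-loops on vertex set V: m u w is the number
  of edges joining u and w (symmetric, zero on the diagonal, supported on V).\<close>
definition multigraph :: "'v set \<Rightarrow> ('v \<Rightarrow> 'v \<Rightarrow> nat) \<Rightarrow> bool" where
  "multigraph V m \<longleftrightarrow> finite V \<and> (\<forall>u w. m u w = m w u) \<and> (\<forall>u. m u u = 0)
     \<and> (\<forall>u w. m u w \<noteq> 0 \<longrightarrow> u \<in> V \<and> w \<in> V)"

definition deg :: "'v set \<Rightarrow> ('v \<Rightarrow> 'v \<Rightarrow> nat) \<Rightarrow> 'v \<Rightarrow> nat" where
  "deg V m v = (\<Sum>u\<in>V. m v u)"

definition nbr_count :: "('v \<Rightarrow> 'v \<Rightarrow> nat) \<Rightarrow> 'v \<Rightarrow> 'v set \<Rightarrow> nat" where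
  "nbr_count m v C = (\<Sum>u\<in>C. m v u)"

definition channels :: "'v set \<Rightarrow> ('v \<Rightarrow> 'v \<Rightarrow> nat) \<Rightarrow> 'v set set" where
  "channels V m = {C. C \<subseteq> V \<and> (\<forall>v\<in>V. even (nbr_count m v C))}"

text \<open>Bipartite with respect to a colouring col (True = black, False = white).\<close>
definition bipartite :: "'v set \<Rightarrow> ('v \<Rightarrow> 'v \<Rightarrow> nat) \<Rightarrow> ('v \<Rightarrow> bool) \<Rightarrow> bool" where
  "bipartite V m col \<longleftrightarrow> (\<forall>u w. m u w \<noteq> 0 \<longrightarrow> col u \<noteq> col w)"

definition channels_B :: "'v set \<Rightarrow> ('v \<Rightarrow> 'v \<Rightarrow> nat) \<Rightarrow> ('v \<Rightarrow> bool) \<Rightarrow> 'v set set" where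
  "channels_B V m col = {C \<in> channels V m. \<forall>x\<in>C. col x}"

definition channels_W :: "'v set \<Rightarrow> ('v \<Rightarrow> 'v \<Rightarrow> nat) \<Rightarrow> ('v \<Rightarrow> bool) \<Rightarrow> 'v set set" where
  "channels_W V m col = {C \<in> channels V m. \<forall>x\<in>C. \<not> col x}"

text \<open>(VC): v has degree 2 and is adjacent to distinct v1, v2; v, v1, v2 are merged
  into a single vertex w (any name not clashing with the remaining vertices), and
  resulting self-loops are deleted.\<close>
definition vc_move :: "'v set \<Rightarrow> ('v \<Rightarrow> 'v \<Rightarrow> nat) \<Rightarrow> ('v \<Rightarrow> bool) \<Rightarrow>
    'v set \<Rightarrow> ('v \<Rightarrow> 'v \<Rightarrow> nat) \<Rightarrow> ('v \<Rightarrow> bool) \<Rightarrow> bool" where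
  "vc_move V m col V' m' col' \<longleftrightarrow>
    (\<exists>v v1 v2 w. v \<in> V \<and> deg V m v = 2 \<and> v1 \<noteq> v2 \<and> m v v1 \<noteq> 0 \<and> m v v2 \<noteq> 0 \<and>
       w \<notin> V - {v, v1, v2} \<and>
       (let f = (\<lambda>x. if x \<in> {v, v1, v2} then w else x) in
         V' = f ` V \<and>
         m' = (\<lambda>x y. if x = y then 0 else
                 (\<Sum>a\<in>V. \<Sum>b\<in>V. if f a = x \<and> f b = y then m a b else 0))) \<and>
       col' = col(w := col v1))"

definition ed_move :: "'v set \<Rightarrow> ('v \<Rightarrow> 'v \<Rightarrow> nat) \<Rightarrow> ('v \<Rightarrow> bool) \<Rightarrow>
    'v set \<Rightarrow> ('v \<Rightarrow> 'v \<Rightarrow> nat) \<Rightarrow> ('v \<Rightarrow> bool) \<Rightarrow> bool" where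
  "ed_move V m col V' m' col' \<longleftrightarrow>
    (\<exists>u w. u \<noteq> w \<and> m u w \<ge> 2 \<and> V' = V \<and>
       m' = (\<lambda>x y. if (x = u \<and> y = w) \<or> (x = w \<and> y = u) then m x y - 2 else m x y) \<and>
       col' = col)"

definition fv_move :: "'v set \<Rightarrow> ('v \<Rightarrow> 'v \<Rightarrow> nat) \<Rightarrow> ('v \<Rightarrow> bool) \<Rightarrow>
    'v set \<Rightarrow> ('v \<Rightarrow> 'v \<Rightarrow> nat) \<Rightarrow> ('v \<Rightarrow> bool) \<Rightarrow> bool" where
  "fv_move V m col V' m' col' \<longleftrightarrow>
    (\<exists>v1 v2. v1 \<in> V \<and> v1 \<noteq> v2 \<and> m v1 v2 \<noteq> 0 \<and> deg V m v1 = 1 \<and>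
       V' = V - {v1, v2} \<and>
       m' = (\<lambda>x y. if x \<in> {v1, v2} \<or> y \<in> {v1, v2} then 0 else m x y) \<and>
       col' = col)"

definition channel_move :: "'v set \<Rightarrow> ('v \<Rightarrow> 'v \<Rightarrow> nat) \<Rightarrow> ('v \<Rightarrow> bool) \<Rightarrow>
    'v set \<Rightarrow> ('v \<Rightarrow> 'v \<Rightarrow> nat) \<Rightarrow> ('v \<Rightarrow> bool) \<Rightarrow> bool" where
  "channel_move V m col V' m' col' \<longleftrightarrow>
    vc_move V m col V' m' col' \<or> ed_move V m col V' m' col' \<or> fv_move V m col V' m' col'"

end

theory Submission
  imports Defs
begin

definition chP :: "'v set \<Rightarrow> ('v \<Rightarrow> 'v \<Rightarrow> nat) \<Rightarrow> ('v \<Rightarrow> bool) \<Rightarrow> 'v set set" where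
  "chP V m P = {C \<in> channels V m. \<forall>x\<in>C. P x}"

lemma chP_True: "channels V m = chP V m (\<lambda>_. True)" by (simp add: chP_def)
lemma chP_B: "channels_B V m col = chP V m col" by (simp add: chP_def channels_B_def)
lemma chP_W: "channels_W V m col = chP V m (\<lambda>x. \<not> col x)" by (simp add: chP_def channels_W_def)

lemma nbr_split: "finite C \<Longrightarrow> nbr_count m x C = nbr_count m x (C - {a}) + (if a \<in> C then m x a else 0)"
  unfolding nbr_count_def by (cases "a \<in> C") (simp_all add: sum.remove)

lemma nbr_zero: "(\<And>y. y\<in>C \<Longrightarrow> m x y = 0) \<Longrightarrow> nbr_count m x C = 0"
  by (simp add: nbr_count_def)

lemma nbr_odd_ex: "odd (nbr_count m x C) \<Longrightarrow> \<exists>y\<in>C. m x y \<noteq> 0"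
  using nbr_zero[of C m x] by fastforce

lemma nbr_cong: "(\<And>y. y\<in>C \<Longrightarrow> m x y = m' x' y) \<Longrightarrow> nbr_count m x C = nbr_count m' x' C"
  by (simp add: nbr_count_def)

lemma ed_channels:
  assumes mg: "multigraph V m" and "ed_move V m col V' m' col'"
  shows "channels V m = channels V' m' \<and> col' = col"
proof -
  obtain u w where uw: "u \<noteq> w" "m u w \<ge> 2" "V' = V" and m': "m' = (\<lambda>x y. if (x = u \<and> y = w) \<or> (x = w \<and> y = u) then m x y - 2 else m x y)"
    and c: "col' = col" using assms(2) unfolding ed_move_def by blast
  have wu: "m w u \<ge> 2" using uw mg by (simp add: multigraph_def)
  have pt: "m x y mod 2 = m' x y mod 2" for x y
  proof (cases "(x = u \<and> y = w) \<or> (x = w \<and> y = u)")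
    case True
    then have "m x y \<ge> 2" using uw wu by auto
    then obtain k where "m x y = k + 2" using le_iff_add by (metis add.commute)
    then show ?thesis using True unfolding m' by simp
  next
    case False then show ?thesis unfolding m' by auto
  qed
  have ev: "even (nbr_count m x C) = even (nbr_count m' x C)" for x C
  proof -
    have "nbr_count m x C mod 2 = (\<Sum>y\<in>C. m x y mod 2) mod 2" by (simp add: nbr_count_def mod_sum_eq)
    also have "\<dots> = (\<Sum>y\<in>C. m' x y mod 2) mod 2" using pt by simp
    also have "\<dots> = nbr_count m' x C mod 2" by (simp add: nbr_count_def mod_sum_eq)
    finally show ?thesis by (simp add: even_iff_mod_2_eq_zero)
  qed
  show ?thesis using ev uw c by (simp add: channels_def)
qed

lemma fv_card:
  assumes mg: "multigraph V m" and v1V: "v1 \<in> V" and ne: "v1 \<noteq> v2" and e: "m v1 v2 \<noteq> 0"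
    and dg: "deg V m v1 = 1"
    and V': "V' = V - {v1, v2}"
    and m': "m' = (\<lambda>x y. if x \<in> {v1, v2} \<or> y \<in> {v1, v2} then 0 else m x y)"
    and P: "\<And>C. C \<subseteq> V \<Longrightarrow> \<forall>x\<in>C. P x \<Longrightarrow> odd (nbr_count m v2 C) \<Longrightarrow> P v1"
  shows "card (chP V m P) = card (chP V' m' P)"
proof -
  have fin: "finite V" using mg by (simp add: multigraph_def)
  have v2V: "v2 \<in> V" using mg e by (auto simp: multigraph_def)
  have sym: "\<And>a b. m a b = m b a" using mg by (simp add: multigraph_def)
  have d: "deg V m v1 = m v1 v2 + (\<Sum>u\<in>V-{v2}. m v1 u)" unfolding deg_def using fin v2V by (simp add: sum.remove)
  have m12: "m v1 v2 = 1" and s0: "(\<Sum>u\<in>V-{v2}. m v1 u) = 0" using d dg e by linarith+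
  have m1o: "m v1 u = 0" if "u \<noteq> v2" for u
  proof (cases "u \<in> V")
    case True with s0 fin that show ?thesis by simp
  next
    case False with mg show ?thesis by (auto simp: multigraph_def)
  qed
  have m21: "m v2 v1 = 1" using m12 sym by metis
  have mx1: "m x v1 = 0" if "x \<noteq> v2" for x using m1o[OF that] sym by metis
  define h where "h = (\<lambda>C::'a set. C - {v1})"
  define g where "g = (\<lambda>C. C \<union> (if odd (nbr_count m v2 C) then {v1} else {}))"
  have A: "v2 \<notin> C \<and> C \<subseteq> V \<and> (\<forall>x\<in>V. even (nbr_count m x C)) \<and> (\<forall>x\<in>C. P x)" if "C \<in> chP V m P" for C
  proof -
    have C: "C \<subseteq> V" "\<forall>x\<in>V. even (nbr_count m x C)" "\<forall>x\<in>C. P x"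
      using that by (auto simp: chP_def channels_def)
    have "finite C" using C fin finite_subset by blast
    from nbr_split[OF this, of m v1 v2] have "nbr_count m v1 C = (if v2 \<in> C then 1 else 0)"
      using nbr_zero[of "C - {v2}" m v1] m1o m12 by simp
    then have "v2 \<notin> C" using C v1V by (metis odd_one)
    then show ?thesis using C by blast
  qed
  have B: "v1 \<notin> C \<and> v2 \<notin> C \<and> C \<subseteq> V \<and> (\<forall>x\<in>V'. even (nbr_count m x C)) \<and> (\<forall>x\<in>C. P x)" if "C \<in> chP V' m' P" for C
  proof -
    have C: "C \<subseteq> V'" "\<forall>x\<in>V'. even (nbr_count m' x C)" "\<forall>x\<in>C. P x"
      using that by (auto simp: chP_def channels_def)
    have "nbr_count m' x C = nbr_count m x C" if "x \<in> V'" for x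
      by (rule nbr_cong) (use C that V' m' in auto)
    then show ?thesis using C V' by auto
  qed
  have gh: "g (h C) = C" if "C \<in> chP V m P" for C
  proof -
    from A[OF that] have a1: "v2 \<notin> C" and a2: "C \<subseteq> V" and a3: "even (nbr_count m v2 C)"
      using v2V by auto
    have "finite C" using a2 fin finite_subset by blast
    from nbr_split[OF this, of m v2 v1] have "nbr_count m v2 C = nbr_count m v2 (C - {v1}) + (if v1 \<in> C then 1 else 0)"
      using m21 by simp
    then have "odd (nbr_count m v2 (C - {v1})) \<longleftrightarrow> v1 \<in> C" using a3 by (simp split: if_splits)
    then show "g (h C) = C" unfolding g_def h_def by auto
  qed
  have hg: "h (g C) = C" if "C \<in> chP V' m' P" for C
  proof -
    from B[OF that] have "v1 \<notin> C" by blast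
    then show ?thesis unfolding g_def h_def by auto
  qed
  have bij: "bij_betw h (chP V m P) (chP V' m' P)"
  proof (rule bij_betw_byWitness[where f'=g])
    show "\<forall>C\<in>chP V m P. g (h C) = C" using gh by blast
    show "\<forall>C\<in>chP V' m' P. h (g C) = C" using hg by blast
    show "h ` chP V m P \<subseteq> chP V' m' P"
    proof
      fix D assume "D \<in> h ` chP V m P"
      then obtain C where C: "C \<in> chP V m P" and D: "D = C - {v1}" unfolding h_def by blast
      from A[OF C] have a1: "v2 \<notin> C" and a2: "C \<subseteq> V" and a3: "\<forall>x\<in>V. even (nbr_count m x C)"
        and a4: "\<forall>x\<in>C. P x" by auto
      have fC: "finite C" using a2 fin finite_subset by blast
      have DV: "D \<subseteq> V'" using a1 a2 D V' by blast
      have "even (nbr_count m' x D)" if x: "x \<in> V'" for x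
      proof -
        have xV: "x \<in> V" "x \<noteq> v1" "x \<noteq> v2" using x V' by auto
        have "nbr_count m' x D = nbr_count m x D"
        proof (rule nbr_cong)
          fix y assume "y \<in> D"
          then have "y \<noteq> v1" "y \<noteq> v2" using D a1 by auto
          then show "m' x y = m x y" unfolding m' using xV by simp
        qed
        also have "\<dots> = nbr_count m x C" using nbr_split[OF fC, of m x v1] mx1[OF xV(3)] D by simp
        finally show ?thesis using a3 xV by simp
      qed
      then show "D \<in> chP V' m' P" using DV a4 D unfolding chP_def channels_def by blast
    qed
    show "g ` chP V' m' P \<subseteq> chP V m P"
    proof
      fix D assume "D \<in> g ` chP V' m' P"
      then obtain C where C: "C \<in> chP V' m' P" and D: "D = g C" by blast
      from B[OF C] have b1: "v1 \<notin> C" and b2: "v2 \<notin> C" and b3: "C \<subseteq> V"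
        and b4: "\<forall>x\<in>V'. even (nbr_count m x C)" and b5: "\<forall>x\<in>C. P x" by auto
      have fC: "finite C" using b3 fin finite_subset by blast
      have fD: "finite D" using fC D unfolding g_def by simp
      have DC: "D - {v1} = C" using b1 D unfolding g_def by auto
      have v1D: "v1 \<in> D \<longleftrightarrow> odd (nbr_count m v2 C)" using D b1 unfolding g_def by auto
      have v2D: "v2 \<notin> D" using D b2 ne unfolding g_def by auto
      have "even (nbr_count m x D)" if x: "x \<in> V" for x
      proof -
        have spl: "nbr_count m x D = nbr_count m x C + (if v1 \<in> D then m x v1 else 0)"
          using nbr_split[OF fD, of m x v1] DC by simp
        show ?thesis
        proof (cases "x = v1")
          case True
          have "nbr_count m x D = 0"
          proof (rule nbr_zero)
            fix y assume "y \<in> D" then have "y \<noteq> v2" using v2D by auto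
            then show "m x y = 0" using m1o True by simp
          qed
          then show ?thesis by simp
        next
          case False
          show ?thesis
          proof (cases "x = v2")
            case True
            then show ?thesis using spl m21 v1D by simp
          next
            case False
            then have "x \<in> V'" using x \<open>x \<noteq> v1\<close> V' by simp
            then show ?thesis using spl mx1[OF False] b4 by simp
          qed
        qed
      qed
      moreover have "\<forall>x\<in>D. P x"
      proof
        fix x assume "x \<in> D"
        show "P x"
        proof (cases "x \<in> C")
          case True then show ?thesis using b5 by blast
        next
          case False
          then have "x = v1" "odd (nbr_count m v2 C)" using \<open>x \<in> D\<close> D unfolding g_def by (auto split: if_splits)
          then show ?thesis using P[OF b3 b5] by simp
        qed
      qed
      moreover have "D \<subseteq> V" using b3 D v1V unfolding g_def by auto
      ultimately show "D \<in> chP V m P" unfolding chP_def channels_def by blast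
    qed
  qed
  then show ?thesis by (rule bij_betw_same_card)
qed

lemma nbr_split3:
  assumes "finite C" "v \<noteq> v1" "v \<noteq> v2" "v1 \<noteq> v2"
  shows "nbr_count m x C = nbr_count m x (C - {v, v1, v2}) + (if v \<in> C then m x v else 0)
     + (if v1 \<in> C then m x v1 else 0) + (if v2 \<in> C then m x v2 else 0)"
proof -
  have e: "C - {v, v1, v2} = C - {v} - {v1} - {v2}" by auto
  show ?thesis
    using nbr_split[OF assms(1), of m x v] nbr_split[of "C - {v}" m x v1] nbr_split[of "C - {v} - {v1}" m x v2] assms
    unfolding e by simp
qed

lemma vc_card:
  assumes mg: "multigraph V m" and vV: "v \<in> V" and dg: "deg V m v = 2" and ne: "v1 \<noteq> v2"
    and e1: "m v v1 \<noteq> 0" and e2: "m v v2 \<noteq> 0" and wn: "w \<notin> V - {v, v1, v2}"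
    and fdef: "f = (\<lambda>x. if x \<in> {v, v1, v2} then w else x)"
    and V': "V' = f ` V"
    and m': "m' = (\<lambda>x y. if x = y then 0 else (\<Sum>a\<in>V. \<Sum>b\<in>V. if f a = x \<and> f b = y then m a b else 0))"
    and P12: "P v1 = P v2"
    and Pv: "\<And>T. T \<subseteq> V \<Longrightarrow> \<forall>x\<in>T. P x \<Longrightarrow> odd (nbr_count m v1 T) \<Longrightarrow> P v"
  shows "card (chP V m P) = card (chP V' m' (P(w := P v1)))"
proof -
  have fin: "finite V" using mg by (simp add: multigraph_def)
  have v1V: "v1 \<in> V" and v2V: "v2 \<in> V" using mg e1 e2 by (auto simp: multigraph_def)
  have sym: "\<And>a b. m a b = m b a" using mg by (simp add: multigraph_def)
  have diag: "\<And>a. m a a = 0" using mg by (simp add: multigraph_def)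
  have vv1: "v \<noteq> v1" and vv2: "v \<noteq> v2" using e1 e2 diag by auto
  have d: "deg V m v = m v v1 + m v v2 + (\<Sum>u\<in>V-{v1}-{v2}. m v u)" unfolding deg_def
    using fin v1V v2V ne by (simp add: sum.remove)
  have mv1: "m v v1 = 1" and mv2: "m v v2 = 1" and s0: "(\<Sum>u\<in>V-{v1}-{v2}. m v u) = 0"
    using d dg e1 e2 by linarith+
  have mvo: "m v u = 0" if "u \<noteq> v1" "u \<noteq> v2" for u
  proof (cases "u \<in> V")
    case True with s0 fin that show ?thesis by simp
  next
    case False with mg show ?thesis by (auto simp: multigraph_def)
  qed
  have mxv: "m x v = 0" if "x \<noteq> v1" "x \<noteq> v2" for x using mvo[OF that] sym by metis
  define R where "R = V - {v, v1, v2}"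
  have wR: "w \<notin> R" using wn R_def by simp
  have V'eq: "V' = insert w R" unfolding V' R_def fdef using vV by auto
  have finR: "finite R" using fin R_def by simp
  have pre: "{a \<in> V. f a = x} = {x}" if "x \<in> R" for x using that wR unfolding R_def fdef by auto
  have prew: "{a \<in> V. f a = w} = {v, v1, v2}" using vV v1V v2V wR unfolding R_def fdef by auto
  have dsum: "(\<Sum>a\<in>V. \<Sum>b\<in>V. if f a = x \<and> f b = y then m a b else 0)
       = (\<Sum>a\<in>{a\<in>V. f a = x}. \<Sum>b\<in>{b\<in>V. f b = y}. m a b)" for x y
  proof -
    have "(\<Sum>b\<in>V. if f a = x \<and> f b = y then m a b else 0) = (if f a = x then (\<Sum>b\<in>{b\<in>V. f b = y}. m a b) else 0)" for a
      using fin by (simp add: sum.inter_filter)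
    then have "(\<Sum>a\<in>V. \<Sum>b\<in>V. if f a = x \<and> f b = y then m a b else 0)
       = (\<Sum>a\<in>V. if f a = x then (\<Sum>b\<in>{b\<in>V. f b = y}. m a b) else 0)" by simp
    also have "\<dots> = (\<Sum>a\<in>{a\<in>V. f a = x}. \<Sum>b\<in>{b\<in>V. f b = y}. m a b)"
      by (rule sum.inter_filter[OF fin, symmetric])
    finally show ?thesis .
  qed
  have m'R: "m' x y = m x y" if "x \<in> R" "y \<in> R" for x y
    using that pre[of x] pre[of y] diag unfolding m' dsum by auto
  have m'Rw: "m' x w = m x v1 + m x v2" if "x \<in> R" for x
  proof -
    have "x \<noteq> w" "x \<noteq> v1" "x \<noteq> v2" "x \<noteq> v" using that wR R_def by auto
    then show ?thesis unfolding m' dsum prew pre[OF that] using vv1 vv2 ne mxv by simp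
  qed
  have m'wR: "m' w x = m x v1 + m x v2" if "x \<in> R" for x
  proof -
    have "x \<noteq> w" "x \<noteq> v1" "x \<noteq> v2" "x \<noteq> v" using that wR R_def by auto
    moreover have "m v x = 0" using mvo \<open>x \<noteq> v1\<close> \<open>x \<noteq> v2\<close> by blast
    ultimately show ?thesis unfolding m' dsum prew pre[OF that] using vv1 vv2 ne sym[of v1 x] sym[of v2 x] by simp
  qed
  have m'ww: "m' w w = 0" unfolding m' by simp
  have N1: "nbr_count m' x C = nbr_count m x (C - {w}) + (if w \<in> C then m x v1 + m x v2 else 0)"
    if "C \<subseteq> V'" "x \<in> R" for C x
  proof -
    have fC: "finite C" using that V'eq finR finite_subset by blast
    have "nbr_count m' x (C - {w}) = nbr_count m x (C - {w})"
      by (rule nbr_cong) (use that V'eq m'R in auto)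
    then show ?thesis using nbr_split[OF fC, of m' x w] m'Rw[OF that(2)] by simp
  qed
  have N2: "nbr_count m' w C = nbr_count m v1 (C - {w}) + nbr_count m v2 (C - {w})"
    if "C \<subseteq> V'" for C
  proof -
    have fC: "finite C" using that V'eq finR finite_subset by blast
    have "nbr_count m' w (C - {w}) = (\<Sum>y\<in>C - {w}. m v1 y + m v2 y)"
      unfolding nbr_count_def
    proof (rule sum.cong)
      fix y assume "y \<in> C - {w}"
      then have "y \<in> R" using that V'eq by auto
      then show "m' w y = m v1 y + m v2 y" using m'wR sym by metis
    qed simp
    then show ?thesis using nbr_split[OF fC, of m' w w] m'ww by (simp add: nbr_count_def sum.distrib)
  qed
  have NvR: "nbr_count m v S = 0" if "S \<subseteq> R" for S
    by (rule nbr_zero) (use that mvo R_def in auto)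
  define P' where "P' = P(w := P v1)"
  define T where "T = (\<lambda>C. (C - {w}) \<union> (if w \<in> C then {v1, v2} else {}))"
  define g where "g = (\<lambda>C. T C \<union> (if odd (nbr_count m v1 (T C)) then {v} else {}))"
  define h where "h = (\<lambda>C. (C - {v, v1, v2}) \<union> (if v1 \<in> C then {w} else {}))"
  have A: "C \<subseteq> V \<and> (\<forall>x\<in>V. even (nbr_count m x C)) \<and> (\<forall>x\<in>C. P x) \<and> (v1 \<in> C \<longleftrightarrow> v2 \<in> C)"
    if "C \<in> chP V m P" for C
  proof -
    have C: "C \<subseteq> V" "\<forall>x\<in>V. even (nbr_count m x C)" "\<forall>x\<in>C. P x"
      using that by (auto simp: chP_def channels_def)
    have fC: "finite C" using C fin finite_subset by blast
    have "C - {v, v1, v2} \<subseteq> R" using C R_def by auto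
    then have "nbr_count m v (C - {v, v1, v2}) = 0" by (rule NvR)
    then have "nbr_count m v C = (if v1 \<in> C then 1 else 0) + (if v2 \<in> C then 1 else 0)"
      using nbr_split3[OF fC vv1 vv2 ne, of m v] mv1 mv2 diag by simp
    then have "v1 \<in> C \<longleftrightarrow> v2 \<in> C" using C(2) vV by (auto split: if_splits)
    then show ?thesis using C by blast
  qed
  have B: "C \<subseteq> V' \<and> (\<forall>x\<in>V'. even (nbr_count m' x C)) \<and> (\<forall>x\<in>C. P' x)"
    if "C \<in> chP V' m' P'" for C
    using that by (auto simp: chP_def channels_def)
  have mv1': "m v1 v = 1" and mv2': "m v2 v = 1" using mv1 mv2 sym by metis+
  have m21: "m v2 v1 = m v1 v2" using sym by metis
  have VR: "V = insert v (insert v1 (insert v2 R))" using vV v1V v2V R_def by auto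
  have gh: "g (h C) = C" if "C \<in> chP V m P" for C
  proof -
    from A[OF that] have a1: "C \<subseteq> V" and a2: "even (nbr_count m v1 C)" and a3: "v1 \<in> C \<longleftrightarrow> v2 \<in> C"
      using v1V by auto
    have fC: "finite C" using a1 fin finite_subset by blast
    have Th: "T (h C) = C - {v}" using a1 a3 wR R_def vv1 vv2 unfolding T_def h_def by auto
    have "nbr_count m v1 C = nbr_count m v1 (C - {v}) + (if v \<in> C then 1 else 0)"
      using nbr_split[OF fC, of m v1 v] mv1' by simp
    then have "odd (nbr_count m v1 (C - {v})) \<longleftrightarrow> v \<in> C" using a2 by (simp split: if_splits)
    then show ?thesis unfolding g_def Th by auto
  qed
  have hg: "h (g C) = C" if "C \<in> chP V' m' P'" for C
  proof -
    from B[OF that] have "C \<subseteq> insert w R" using V'eq by auto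
    then show ?thesis using R_def ne vv1 vv2 unfolding g_def h_def T_def by auto
  qed
  have bij: "bij_betw h (chP V m P) (chP V' m' P')"
  proof (rule bij_betw_byWitness[where f'=g])
    show "\<forall>C\<in>chP V m P. g (h C) = C" using gh by blast
    show "\<forall>C\<in>chP V' m' P'. h (g C) = C" using hg by blast
    show "h ` chP V m P \<subseteq> chP V' m' P'"
    proof
      fix D assume "D \<in> h ` chP V m P"
      then obtain C where C: "C \<in> chP V m P" and D: "D = h C" by blast
      from A[OF C] have a1: "C \<subseteq> V" and a2: "\<forall>x\<in>V. even (nbr_count m x C)" and a3: "\<forall>x\<in>C. P x"
        and a4: "v1 \<in> C \<longleftrightarrow> v2 \<in> C" by auto
      have fC: "finite C" using a1 fin finite_subset by blast
      define S where "S = C - {v, v1, v2}"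
      have SR: "S \<subseteq> R" using a1 S_def R_def by auto
      have DS: "D - {w} = S" using D SR wR unfolding h_def S_def by auto
      have wD: "w \<in> D \<longleftrightarrow> v1 \<in> C" using D a1 wR R_def unfolding h_def by auto
      have DV: "D \<subseteq> V'" using D V'eq SR unfolding h_def S_def by auto
      have sp: "nbr_count m x C = nbr_count m x S + (if v \<in> C then m x v else 0)
         + (if v1 \<in> C then m x v1 else 0) + (if v2 \<in> C then m x v2 else 0)" for x
        using nbr_split3[OF fC vv1 vv2 ne, of m x] S_def by simp
      have "even (nbr_count m' x D)" if x: "x \<in> V'" for x
      proof (cases "x = w")
        case True
        have e1: "even (nbr_count m v1 C)" and e2: "even (nbr_count m v2 C)" using a2 v1V v2V by auto
        have "nbr_count m' x D = nbr_count m v1 S + nbr_count m v2 S" using N2[OF DV] DS True by simp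
        then show ?thesis using e1 e2 sp[of v1] sp[of v2] mv1' mv2' m21 diag a4 by (auto split: if_splits)
      next
        case False
        then have xR: "x \<in> R" using x V'eq by auto
        then have "x \<in> V" "x \<noteq> v1" "x \<noteq> v2" using R_def by auto
        then have "even (nbr_count m x C)" "m x v = 0" using a2 mxv by auto
        then show ?thesis using N1[OF DV xR] DS wD sp[of x] a4 by (auto split: if_splits)
      qed
      moreover have "\<forall>x\<in>D. P' x"
        using D a3 SR wR unfolding h_def P'_def S_def by (auto split: if_splits)
      ultimately show "D \<in> chP V' m' P'" using DV unfolding chP_def channels_def by blast
    qed
    show "g ` chP V' m' P' \<subseteq> chP V m P"
    proof
      fix D assume "D \<in> g ` chP V' m' P'"
      then obtain C where C: "C \<in> chP V' m' P'" and D: "D = g C" by blast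
      from B[OF C] have b1: "C \<subseteq> insert w R" and b2: "\<forall>x\<in>V'. even (nbr_count m' x C)"
        and b3: "\<forall>x\<in>C. P' x" using V'eq by auto
      define S where "S = C - {w}"
      have SR: "S \<subseteq> R" using b1 S_def by auto
      have CV': "C \<subseteq> V'" using b1 V'eq by simp
      define TC where "TC = T C"
      have TCV: "TC \<subseteq> V" using SR v1V v2V R_def unfolding TC_def T_def S_def by auto
      have fTC: "finite TC" using TCV fin finite_subset by blast
      define c where "c = odd (nbr_count m v1 TC)"
      have Dfin: "finite D" using fTC D unfolding g_def TC_def by simp
      have DS: "D - {v, v1, v2} = S" using D SR R_def unfolding g_def T_def S_def by auto
      have vD: "v \<in> D \<longleftrightarrow> c" using D vv1 vv2 SR R_def unfolding g_def c_def TC_def T_def S_def by auto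
      have v1D: "v1 \<in> D \<longleftrightarrow> w \<in> C" using D vv1 SR R_def unfolding g_def T_def S_def by auto
      have v2D: "v2 \<in> D \<longleftrightarrow> w \<in> C" using D vv2 SR R_def unfolding g_def T_def S_def by auto
      have TS: "TC - {v, v1, v2} = S" "v \<notin> TC" "v1 \<in> TC \<longleftrightarrow> w \<in> C" "v2 \<in> TC \<longleftrightarrow> w \<in> C"
        using SR R_def vv1 vv2 unfolding TC_def T_def S_def by auto
      have nT: "nbr_count m v1 TC = nbr_count m v1 S + (if w \<in> C then m v1 v2 else 0)"
        using nbr_split3[OF fTC vv1 vv2 ne, of m v1] TS diag by simp
      have sp: "nbr_count m x D = nbr_count m x S + (if c then m x v else 0)
         + (if w \<in> C then m x v1 else 0) + (if w \<in> C then m x v2 else 0)" for x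
        using nbr_split3[OF Dfin vv1 vv2 ne, of m x] DS vD v1D v2D by simp
      have ew: "even (nbr_count m v1 S + nbr_count m v2 S)"
        using b2 N2[OF CV'] V'eq S_def by simp
      have "even (nbr_count m x D)" if x: "x \<in> V" for x
      proof -
        have "x = v \<or> x = v1 \<or> x = v2 \<or> x \<in> R" using x VR by auto
        then show ?thesis
        proof (elim disjE)
          assume "x = v"
          then show ?thesis using sp[of v] NvR[OF SR] diag mv1 mv2 by simp
        next
          assume "x = v1"
          then show ?thesis using sp[of v1] nT c_def mv1' diag by (auto split: if_splits)
        next
          assume "x = v2"
          then show ?thesis using sp[of v2] nT c_def mv2' diag m21 ew by (auto split: if_splits)
        next
          assume xR: "x \<in> R"
          then have "x \<noteq> v1" "x \<noteq> v2" using R_def by auto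
          then have "m x v = 0" using mxv by auto
          moreover have "even (nbr_count m' x C)" using b2 xR V'eq by auto
          ultimately show ?thesis using sp[of x] N1[OF CV' xR] S_def by (cases "w \<in> C") (simp_all add: add.assoc)
        qed
      qed
      moreover have "\<forall>x\<in>D. P x"
      proof
        fix x assume xD: "x \<in> D"
        have PT: "\<forall>y\<in>TC. P y"
        proof
          fix y assume "y \<in> TC"
          then have "(y \<in> C \<and> y \<noteq> w) \<or> (w \<in> C \<and> (y = v1 \<or> y = v2))" unfolding TC_def T_def by (auto split: if_splits)
          then show "P y" using b3 P12 unfolding P'_def by (metis fun_upd_apply)
        qed
        have "x \<in> TC \<or> (x = v \<and> c)" using xD D unfolding g_def c_def TC_def by (auto split: if_splits)
        then show "P x" using PT Pv[OF TCV PT] c_def by blast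
      qed
      moreover have "D \<subseteq> V" using TCV D vV unfolding g_def TC_def by auto
      ultimately show "D \<in> chP V m P" unfolding chP_def channels_def by blast
    qed
  qed
  then show ?thesis unfolding P'_def by (rule bij_betw_same_card)
qed

theorem lemma6p2:
  fixes V V' :: "'v set" and m m' :: "'v \<Rightarrow> 'v \<Rightarrow> nat" and col col' :: "'v \<Rightarrow> bool"
  assumes "multigraph V m"
    and "channel_move V m col V' m' col'"
  shows "card (channels V m) = card (channels V' m') \<and>
         (bipartite V m col \<longrightarrow>
           card (channels_B V m col) = card (channels_B V' m' col') \<and>
           card (channels_W V m col) = card (channels_W V' m' col'))"
proof -
  note mg = assms(1)
  have bip: "col a \<noteq> col b" if "bipartite V m col" "m a b \<noteq> 0" for a b
    using that unfolding bipartite_def by blast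
  consider (vc) "vc_move V m col V' m' col'" | (ed) "ed_move V m col V' m' col'" | (fv) "fv_move V m col V' m' col'"
    using assms(2) unfolding channel_move_def by blast
  then show ?thesis
  proof cases
    case ed
    have E: "channels V m = channels V' m' \<and> col' = col" by (rule ed_channels[OF mg ed])
    then have E1: "channels V m = channels V' m'" and E2: "col' = col" by (rule conjunct1, rule conjunct2)
    show ?thesis unfolding channels_B_def channels_W_def E1 E2 by (rule conjI, rule refl, rule impI, rule conjI, rule refl, rule refl)
  next
    case fv
    then obtain v1 v2 where v1V: "v1 \<in> V" and ne: "v1 \<noteq> v2" and e: "m v1 v2 \<noteq> 0" and dg: "deg V m v1 = 1"
      and V': "V' = V - {v1, v2}"
      and m': "m' = (\<lambda>x y. if x \<in> {v1, v2} \<or> y \<in> {v1, v2} then 0 else m x y)"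
      and c: "col' = col" using fv unfolding fv_move_def by (elim exE conjE) (rule that; assumption)
    note F = fv_card[OF mg v1V ne e dg V' m']
    have 1: "card (channels V m) = card (channels V' m')"
      unfolding chP_True by (rule F) simp
    have 2: "card (channels_B V m col) = card (channels_B V' m' col') \<and>
           card (channels_W V m col) = card (channels_W V' m' col')" if b: "bipartite V m col"
    proof -
      have key: "col v1 = col y" if "m v2 y \<noteq> 0" for y
        using bip[OF b that] bip[OF b e] by (cases "col v2") auto
      have "card (chP V m col) = card (chP V' m' col)"
      proof (rule F)
        fix C assume "C \<subseteq> V" "\<forall>x\<in>C. col x" "odd (nbr_count m v2 C)"
        then obtain y where "y \<in> C" "m v2 y \<noteq> 0" "\<forall>x\<in>C. col x" using nbr_odd_ex[of m v2] by blast
        then show "col v1" using key[of y] by simp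
      qed
      moreover have "card (chP V m (\<lambda>x. \<not> col x)) = card (chP V' m' (\<lambda>x. \<not> col x))"
      proof (rule F)
        fix C assume "C \<subseteq> V" "\<forall>x\<in>C. \<not> col x" "odd (nbr_count m v2 C)"
        then obtain y where "y \<in> C" "m v2 y \<noteq> 0" "\<forall>x\<in>C. \<not> col x" using nbr_odd_ex[of m v2] by blast
        then show "\<not> col v1" using key[of y] by simp
      qed
      ultimately show ?thesis unfolding chP_B chP_W c by simp
    qed
    show ?thesis using 1 2 by blast
  next
    case vc
    define f where "f v v1 v2 w = (\<lambda>x. if x \<in> {v, v1, v2} then w else (x::'v))" for v v1 v2 w :: 'v
    obtain v v1 v2 w where vV: "v \<in> V" and dg: "deg V m v = 2" and ne: "v1 \<noteq> v2"
      and e1: "m v v1 \<noteq> 0" and e2: "m v v2 \<noteq> 0" and wn: "w \<notin> V - {v, v1, v2}"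
      and L: "let f = (\<lambda>x. if x \<in> {v, v1, v2} then w else x) in
         V' = f ` V \<and>
         m' = (\<lambda>x y. if x = y then 0 else
                 (\<Sum>a\<in>V. \<Sum>b\<in>V. if f a = x \<and> f b = y then m a b else 0))"
      and c: "col' = col(w := col v1)"
      using vc unfolding vc_move_def by (elim exE conjE) (rule that; assumption)
    have LL: "V' = f v v1 v2 w ` V \<and>
         m' = (\<lambda>x y. if x = y then 0 else
                 (\<Sum>a\<in>V. \<Sum>b\<in>V. if f v v1 v2 w a = x \<and> f v v1 v2 w b = y then m a b else 0))"
      using L unfolding Let_def f_def .
    have V': "V' = f v v1 v2 w ` V" using LL by (rule conjunct1)
    have m': "m' = (\<lambda>x y. if x = y then 0 else
                 (\<Sum>a\<in>V. \<Sum>b\<in>V. if f v v1 v2 w a = x \<and> f v v1 v2 w b = y then m a b else 0))"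
      using LL by (rule conjunct2)
    note F = vc_card[OF mg vV dg ne e1 e2 wn f_def V' m']
    have 1: "card (channels V m) = card (channels V' m')"
    proof -
      have "card (chP V m (\<lambda>_. True)) = card (chP V' m' ((\<lambda>_. True)(w := True)))"
        by (rule F) simp_all
      moreover have "(\<lambda>_. True)(w := True) = (\<lambda>_. True)" by (rule ext) simp
      ultimately show ?thesis unfolding chP_True by simp
    qed
    have 2: "card (channels_B V m col) = card (channels_B V' m' col') \<and>
           card (channels_W V m col) = card (channels_W V' m' col')" if b: "bipartite V m col"
    proof -
      have c12: "col v1 = col v2" using bip[OF b e1] bip[OF b e2] by (cases "col v") auto
      have key: "col v = col y" if "m v1 y \<noteq> 0" for y
        using bip[OF b that] bip[OF b e1] by (cases "col v1") auto
      have "card (chP V m col) = card (chP V' m' (col(w := col v1)))"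
      proof (rule F)
        show "col v1 = col v2" by (rule c12)
        fix T assume "T \<subseteq> V" "\<forall>x\<in>T. col x" "odd (nbr_count m v1 T)"
        then obtain y where "y \<in> T" "m v1 y \<noteq> 0" "\<forall>x\<in>T. col x" using nbr_odd_ex[of m v1] by blast
        then show "col v" using key[of y] by simp
      qed
      moreover have "card (chP V m (\<lambda>x. \<not> col x)) = card (chP V' m' ((\<lambda>x. \<not> col x)(w := \<not> col v1)))"
      proof (rule F)
        show "(\<not> col v1) = (\<not> col v2)" using c12 by simp
        fix T assume "T \<subseteq> V" "\<forall>x\<in>T. \<not> col x" "odd (nbr_count m v1 T)"
        then obtain y where "y \<in> T" "m v1 y \<noteq> 0" "\<forall>x\<in>T. \<not> col x" using nbr_odd_ex[of m v1] by blast
        then show "\<not> col v" using key[of y] by simp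
      qed
      moreover have "(\<lambda>x. \<not> col x)(w := \<not> col v1) = (\<lambda>x. \<not> col' x)" unfolding c by (rule ext) simp
      ultimately show ?thesis unfolding chP_B chP_W c by simp
    qed
    show ?thesis using 1 2 by blast
  qed
qed

end
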